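(* Let $L$ be any infinite regular language over an alphabet $\Sigma$ with $|\Sigma|\geq 2$. Then there exists a positive integer $m$ such that the following holds: for any integer $n\geq 1$ and any subset $S\subseteq L\cap\Sigma^n$ with $|S|>m$, and for any integer $i\in\{0,1,\ldots,n\}$, there exist two strings $x=x_1x_2$ and $y=y_1y_2$ in $S$ with $|x_1|=|y_1|=i$ and $|x_2|=|y_2|$ such that (i) $x\neq y$, (ii) $y_1x_2\in L$, and (iii) $x_1y_2\in L$.
   Context: $\Sigma^n$ denotes the set of all strings of length exactly $n$ over $\Sigma$; $|w|$ denotes the length of a string $w$. *)

theory Defs
  imports Main
begin

text \<open>States are encoded as natural numbers (any finite state set can be so encoded).\<close>

definition dfa_run :: "(nat \<Rightarrow> 'a \<Rightarrow> nat) \<Rightarrow> nat \<Rightarrow> 'a list \<Rightarrow> nat" where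
  "dfa_run \<delta> q w = fold (\<lambda>a s. \<delta> s a) w q"

definition regular_on :: "'a set \<Rightarrow> 'a list set \<Rightarrow> bool" where
  "regular_on \<Sigma> L \<longleftrightarrow>
     (\<exists>(Q::nat set) q0 \<delta> F. finite Q \<and> q0 \<in> Q \<and> F \<subseteq> Q \<and>
        (\<forall>q\<in>Q. \<forall>a\<in>\<Sigma>. \<delta> q a \<in> Q) \<and>
        L = {w \<in> lists \<Sigma>. dfa_run \<delta> q0 w \<in> F})"

end

theory Submission
  imports Defs
begin

lemma dfa_run_in:
  "q \<in> Q \<Longrightarrow> \<forall>q\<in>Q. \<forall>a\<in>\<Sigma>. \<delta> q a \<in> Q \<Longrightarrow> w \<in> lists \<Sigma> \<Longrightarrow> dfa_run \<delta> q w \<in> Q"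
  by (induction w arbitrary: q) (auto simp: dfa_run_def)

lemma dfa_run_append: "dfa_run \<delta> q (u @ v) = dfa_run \<delta> (dfa_run \<delta> q u) v"
  by (simp add: dfa_run_def)

theorem lemma3p1:
  fixes \<Sigma> :: "'a set" and L :: "'a list set"
  assumes "finite \<Sigma>" and "card \<Sigma> \<ge> 2"
    and "regular_on \<Sigma> L" and "infinite L"
  shows "\<exists>m::nat. m > 0 \<and>
    (\<forall>(n::nat) S (i::nat). n \<ge> 1 \<longrightarrow> S \<subseteq> L \<inter> {w \<in> lists \<Sigma>. length w = n} \<longrightarrow>
       card S > m \<longrightarrow> i \<le> n \<longrightarrow>
       (\<exists>x\<in>S. \<exists>y\<in>S. x \<noteq> y \<and>
          take i y @ drop i x \<in> L \<and> take i x @ drop i y \<in> L))"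
proof -
  obtain Q :: "nat set" and q0 \<delta> F where Q: "finite Q" "q0 \<in> Q" "F \<subseteq> Q"
    and d: "\<forall>q\<in>Q. \<forall>a\<in>\<Sigma>. \<delta> q a \<in> Q"
    and L: "L = {w \<in> lists \<Sigma>. dfa_run \<delta> q0 w \<in> F}"
    using assms(3) unfolding regular_on_def by blast
  have pos: "card Q > 0" using Q by (auto simp: card_gt_0_iff)
  show ?thesis
  proof (intro exI conjI allI impI)
    show "card Q > 0" by (rule pos)
    fix n S i
    assume S: "S \<subseteq> L \<inter> {w \<in> lists \<Sigma>. length w = n}" and c: "card S > card Q" and i: "i \<le> n"
    have fS: "finite S" using c by (metis card.infinite not_less0)
    define f where "f = (\<lambda>x. dfa_run \<delta> q0 (take i x))"
    have "f ` S \<subseteq> Q"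
    proof
      fix q assume "q \<in> f ` S"
      then obtain x where x: "x \<in> S" "q = f x" by blast
      have "x \<in> lists \<Sigma>" using S x by auto
      hence "take i x \<in> lists \<Sigma>" by (metis append_take_drop_id append_in_lists_conv)
      thus "q \<in> Q" using x Q d dfa_run_in unfolding f_def by blast
    qed
    hence "card (f ` S) \<le> card Q" using Q card_mono by blast
    hence "\<not> inj_on f S" using c card_image by fastforce
    then obtain x y where xy: "x \<in> S" "y \<in> S" "x \<noteq> y" "f x = f y"
      unfolding inj_on_def by blast
    have xl: "x \<in> lists \<Sigma>" "dfa_run \<delta> q0 x \<in> F" using S xy L by auto
    have yl: "y \<in> lists \<Sigma>" "dfa_run \<delta> q0 y \<in> F" using S xy L by auto
    have lx: "take i x \<in> lists \<Sigma>" "drop i x \<in> lists \<Sigma>"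
      using xl by (metis append_take_drop_id append_in_lists_conv)+
    have ly: "take i y \<in> lists \<Sigma>" "drop i y \<in> lists \<Sigma>"
      using yl by (metis append_take_drop_id append_in_lists_conv)+
    have ex: "dfa_run \<delta> q0 x = dfa_run \<delta> (f x) (drop i x)"
      unfolding f_def by (metis append_take_drop_id dfa_run_append)
    have ey: "dfa_run \<delta> q0 y = dfa_run \<delta> (f y) (drop i y)"
      unfolding f_def by (metis append_take_drop_id dfa_run_append)
    have "take i y @ drop i x \<in> L"
      using ly lx xl ex xy(4) unfolding L by (auto simp: dfa_run_append f_def)
    moreover have "take i x @ drop i y \<in> L"
      using ly lx yl ey xy(4) unfolding L by (auto simp: dfa_run_append f_def)
    ultimately show "\<exists>x\<in>S. \<exists>y\<in>S. x \<noteq> y \<and> take i y @ drop i x \<in> L \<and> take i x @ drop i y \<in> L"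
      using xy by blast
  qed
qed

end
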